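(* Let $x$ be a sequence of length $n$, let $i\in\{1,\ldots,n-1\}$ and $y=\tau(x,i)$. Suppose $x[i]>x[i+1]$. Then: (1) $\overrightarrow{b_y}=1$; (2) $\overleftarrow{b_y}=0$ if $\overleftarrow{a_x}=0$, and $\overleftarrow{b_y}=\overleftarrow{a_x}+1$ otherwise; (3) $\overrightarrow{a_y}=0$ if $\overrightarrow{b_x}=0$, and $\overrightarrow{a_y}=\overrightarrow{b_x}-1$ otherwise; (4) $\overleftarrow{a_y}\le n-i-1$ if $\overleftarrow{a_x}=0$, and $\overleftarrow{a_y}\le\overleftarrow{a_x}$ otherwise.
   Context: Sequences are finite sequences of pairwise distinct integers indexed from $1$. For $1\le i\le n-1$, $\tau(x,i)$ is the sequence obtained from $x$ by exchanging $x[i]$ and $x[i+1]$. The parent-distance table of $x$ is $\overrightarrow{PD}_x[k]=k-\max\{j<k : x[j]<x[k]\}$ if such $j$ exists and $0$ otherwise; the reverse parent-distance table is $\overleftarrow{PD}_x[k]=\min\{j : k<j\le n,\ x[j]<x[k]\}-k$ if such $j$ exists and $0$ otherwise. Notation (for $z\in\{x,y\}$): $\overrightarrow{a_z}=\overrightarrow{PD}_z[i]$, $\overrightarrow{b_z}=\overrightarrow{PD}_z[i+1]$, $\overleftarrow{a_z}=\overleftarrow{PD}_z[i+1]$, $\overleftarrow{b_z}=\overleftarrow{PD}_z[i]$ (in the reverse tables, $a$ refers to position $i+1$ and $b$ to position $i$). *)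

theory Defs
  imports Main
begin

text \<open>Sequences are lists of pairwise distinct integers, indexed from 1:
  the k-th entry x[k] is  nth1 x k = x ! (k - 1).\<close>

definition nth1 :: "int list \<Rightarrow> nat \<Rightarrow> int" where
  "nth1 x k = x ! (k - 1)"

text \<open>tau x i: exchange x[i] and x[i+1] (1-based).\<close>
definition tau :: "int list \<Rightarrow> nat \<Rightarrow> int list" where
  "tau x i = (x[i - 1 := nth1 x (i + 1)])[i := nth1 x i]"

definition PD :: "int list \<Rightarrow> nat \<Rightarrow> nat" where
  "PD x k = (if \<exists>j. 1 \<le> j \<and> j < k \<and> nth1 x j < nth1 x k
             then k - Max {j. 1 \<le> j \<and> j < k \<and> nth1 x j < nth1 x k}
             else 0)"

definition RPD :: "int list \<Rightarrow> nat \<Rightarrow> nat" where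
  "RPD x k = (if \<exists>j. k < j \<and> j \<le> length x \<and> nth1 x j < nth1 x k
              then Min {j. k < j \<and> j \<le> length x \<and> nth1 x j < nth1 x k} - k
              else 0)"

end

theory Submission
  imports Defs
begin

theorem lemma2:
  fixes x :: "int list" and n i :: nat
  assumes "distinct x" and "length x = n"
    and "1 \<le> i" and "i \<le> n - 1"
    and "nth1 x i > nth1 x (i + 1)"
  defines "y \<equiv> tau x i"
  shows "PD y (i + 1) = 1
    \<and> RPD y i = (if RPD x (i + 1) = 0 then 0 else RPD x (i + 1) + 1)
    \<and> PD y i = (if PD x (i + 1) = 0 then 0 else PD x (i + 1) - 1)
    \<and> (if RPD x (i + 1) = 0 then RPD y (i + 1) \<le> n - i - 1
          else RPD y (i + 1) \<le> RPD x (i + 1))"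
proof -
  have iln: "i < n" using assms(3,4) by linarith
  have ly: "length y = n" using assms(2) by (simp add: y_def tau_def)
  have ny: "nth1 y k = (if k = i then nth1 x (i+1) else if k = i+1 then nth1 x i else nth1 x k)"
    if "1 \<le> k" "k \<le> n" for k
    using that iln assms(2,3) unfolding y_def tau_def nth1_def
    by (auto simp: nth_list_update)
  have yi: "nth1 y i = nth1 x (i+1)" using ny[of i] assms(3) iln by simp
  have yi1: "nth1 y (i+1) = nth1 x i" using ny[of "i+1"] assms(3) iln by simp
  have p1: "PD y (i + 1) = 1"
  proof -
    let ?S = "{j. 1 \<le> j \<and> j < i + 1 \<and> nth1 y j < nth1 y (i + 1)}"
    have iS: "i \<in> ?S" using assms(3,5) yi yi1 by simp
    have fS: "finite ?S" by (rule finite_subset[of _ "{..<i+1}"]) auto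
    have "Max ?S = i" using iS fS by (intro Max_eqI) auto
    then show ?thesis using iS unfolding PD_def by auto
  qed
  define A where "A = {j. i + 1 < j \<and> j \<le> length x \<and> nth1 x j < nth1 x (i + 1)}"
  define B where "B = {j. i < j \<and> j \<le> length y \<and> nth1 y j < nth1 y i}"
  have AB: "B = A"
  proof (intro set_eqI iffI)
    fix j assume "j \<in> B"
    then have j: "i < j" "j \<le> n" "nth1 y j < nth1 y i" unfolding B_def using ly by auto
    have "j \<noteq> i + 1" using j(3) yi yi1 assms(5) by auto
    then have "i + 1 < j" using j(1) by simp
    then show "j \<in> A" using j ny[of j] yi assms(2) unfolding A_def by auto
  next
    fix j assume "j \<in> A"
    then have j: "i + 1 < j" "j \<le> n" "nth1 x j < nth1 x (i+1)" unfolding A_def using assms(2) by auto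
    then show "j \<in> B" using ny[of j] yi ly unfolding B_def by auto
  qed
  have fA: "finite A" unfolding A_def by (rule finite_subset[of _ "{..length x}"]) auto
  have rx: "RPD x (i+1) = (if A = {} then 0 else Min A - (i+1))"
    unfolding RPD_def A_def by auto
  have ry: "RPD y i = (if A = {} then 0 else Min A - i)"
    unfolding RPD_def AB[symmetric] B_def by auto
  have p2: "RPD y i = (if RPD x (i + 1) = 0 then 0 else RPD x (i + 1) + 1)"
  proof (cases "A = {}")
    case True then show ?thesis using rx ry by simp
  next
    case False
    then have "Min A \<in> A" using fA by simp
    then have "Min A > i + 1" unfolding A_def by simp
    then show ?thesis using rx ry False by simp
  qed
  define C where "C = {j. 1 \<le> j \<and> j < i + 1 \<and> nth1 x j < nth1 x (i + 1)}"
  define D where "D = {j. 1 \<le> j \<and> j < i \<and> nth1 y j < nth1 y i}"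
  have CD: "D = C" unfolding C_def D_def using ny yi iln assms(5)
    by (auto simp: less_Suc_eq)
  have fC: "finite C" unfolding C_def by (rule finite_subset[of _ "{..<i+1}"]) auto
  have px: "PD x (i+1) = (if C = {} then 0 else i + 1 - Max C)"
    unfolding PD_def C_def by auto
  have py: "PD y i = (if C = {} then 0 else i - Max C)"
    unfolding PD_def CD[symmetric] D_def by auto
  have p3: "PD y i = (if PD x (i + 1) = 0 then 0 else PD x (i + 1) - 1)"
  proof (cases "C = {}")
    case True then show ?thesis using px py by simp
  next
    case False
    then have "Max C \<in> C" using fC by simp
    then have "Max C < i" unfolding C_def using assms(5) by (auto simp: less_Suc_eq)
    then show ?thesis using px py False by simp
  qed
  define E where "E = {j. i + 1 < j \<and> j \<le> length y \<and> nth1 y j < nth1 y (i + 1)}"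
  have E: "E = {j. i + 1 < j \<and> j \<le> n \<and> nth1 x j < nth1 x i}"
    unfolding E_def using ny yi1 ly by auto
  have fE: "finite E" unfolding E by (rule finite_subset[of _ "{..n}"]) auto
  have AE: "A \<subseteq> E" unfolding A_def E using assms(2,5) by auto
  have ryi: "RPD y (i+1) = (if E = {} then 0 else Min E - (i+1))"
    unfolding RPD_def E_def by auto
  have p4: "if RPD x (i + 1) = 0 then RPD y (i + 1) \<le> n - i - 1
          else RPD y (i + 1) \<le> RPD x (i + 1)"
  proof (cases "A = {}")
    case True
    have "RPD y (i+1) \<le> n - i - 1"
    proof (cases "E = {}")
      case False
      then have "Min E \<in> E" using fE by simp
      then have "Min E \<le> n" unfolding E by simp
      then show ?thesis using ryi False by simp
    qed (use ryi in simp)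
    then show ?thesis using True rx by simp
  next
    case False
    then have mA: "Min A \<in> A" using fA by simp
    then have gt: "Min A > i + 1" unfolding A_def by simp
    have "E \<noteq> {}" using False AE by blast
    moreover have "Min E \<le> Min A" using mA AE fE by (intro Min_le) auto
    ultimately show ?thesis using rx ryi False gt by simp
  qed
  show ?thesis using p1 p2 p3 p4 by blast
qed

end
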